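(* Let $U\subset\mathbb{R}^n$ be a bounded domain and let $V$ be an open set with $\overline V\subset U$. Let $(u_1,u_2)$ be a viscosity supersolution of the system (S) in $U$. Assume there is $x_0\in\partial V$ such that $u_1(x_0)\le u_i(x)$ for all $x\in U$ and $i=1,2$ (i.e. $u_1(x_0)=\min_{i=1,2}\min_{U}u_i$), and $u_1(x_0)<u_i(x)$ for all $x\in V$ and $i=1,2$. Assume further that $V$ satisfies the interior ball condition at $x_0$: there is an open ball $B=B(\bar x,R)\subset V$ with $x_0\in\partial B$. Let $\nu(x_0)=(x_0-\bar x)/|x_0-\bar x|$ be the outward unit normal at $x_0$. Then $$\liminf_{s\to0^+}\frac{u_1(x_0-s\nu(x_0))-u_1(x_0)}{s}>0.$$
   Context: For $\varphi\in C^2$ near $x$, set $\Delta_\infty\varphi(x)=|D\varphi(x)|^{-2}\sum_{k,l=1}^n\varphi_{x_k}\varphi_{x_l}\varphi_{x_kx_l}(x)$ when $D\varphi(x)\neq0$. Define $\Delta_\infty^+\varphi(x)=\Delta_\infty\varphi(x)$ if $D\varphi(x)\ne0$ and $\Delta_\infty^+\varphi(x)=\max\{D^2\varphi(x)v\cdot v: v\in\mathbb{S}^{n-1}\}$ if $D\varphi(x)=0$; define $\Delta_\infty^-\varphi(x)$ in the same way with $\min$ in place of $\max$. The system (S) on an open set $\Omega$ is: $-\Delta_\infty u_1+u_1-u_2=0$ and $-\Delta_\infty u_2+u_2-u_1=0$ in $\Omega$. A pair $(u_1,u_2)$ of upper semicontinuous functions on $\Omega$ is a viscosity subsolution of (S)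 in $\Omega$ if for each $i\in\{1,2\}$, $j=3-i$, and each $\varphi\in C^2(\Omega)$ such that $u_i-\varphi$ has a local maximum at $x_0\in\Omega$, one has $-\Delta_\infty^+\varphi(x_0)+u_i(x_0)-u_j(x_0)\le0$. A pair of lower semicontinuous functions on $\Omega$ is a viscosity supersolution if for each $i$, $j=3-i$, and each $\varphi\in C^2(\Omega)$ such that $u_i-\varphi$ has a local minimum at $x_0\in\Omega$, one has $-\Delta_\infty^-\varphi(x_0)+u_i(x_0)-u_j(x_0)\ge0$. A viscosity solution is a pair that is both a subsolution and a supersolution. *)

theory Defs
  imports "HOL-Analysis.Analysis"
begin

definition lsc_on :: "('a::topological_space) set \<Rightarrow> ('a \<Rightarrow> real) \<Rightarrow> bool" where
  "lsc_on S u \<longleftrightarrow> (\<forall>x\<in>S. \<forall>t. t < u x \<longrightarrow> eventually (\<lambda>y. t < u y) (at x within S))"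

definition C2_with :: "(real^'n) set \<Rightarrow> (real^'n \<Rightarrow> real) \<Rightarrow> (real^'n \<Rightarrow> real^'n)
    \<Rightarrow> (real^'n \<Rightarrow> real^'n^'n) \<Rightarrow> bool" where
  "C2_with \<Omega> \<phi> g H \<longleftrightarrow>
     (\<forall>x\<in>\<Omega>. (\<phi> has_derivative (\<lambda>h. g x \<bullet> h)) (at x)) \<and>
     (\<forall>x\<in>\<Omega>. (g has_derivative (\<lambda>h. H x *v h)) (at x)) \<and>
     continuous_on \<Omega> H"

definition inf_lap_minus :: "real^'n \<Rightarrow> real^'n^'n \<Rightarrow> real" where
  "inf_lap_minus p X =
     (if p \<noteq> 0 then (p \<bullet> (X *v p)) / (norm p)^2
      else Inf {(X *v v) \<bullet> v | v. norm v = 1})"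

definition super_component :: "(real^'n) set \<Rightarrow> (real^'n \<Rightarrow> real) \<Rightarrow> (real^'n \<Rightarrow> real) \<Rightarrow> bool" where
  "super_component \<Omega> ui uj \<longleftrightarrow>
     (\<forall>\<phi> g H x0. C2_with \<Omega> \<phi> g H \<and> x0 \<in> \<Omega> \<and>
        (\<exists>e>0. \<forall>y\<in>\<Omega> \<inter> ball x0 e. ui y - \<phi> y \<ge> ui x0 - \<phi> x0) \<longrightarrow>
        - inf_lap_minus (g x0) (H x0) + ui x0 - uj x0 \<ge> 0)"

definition visc_supersol_S :: "(real^'n) set \<Rightarrow> (real^'n \<Rightarrow> real) \<Rightarrow> (real^'n \<Rightarrow> real) \<Rightarrow> bool" where
  "visc_supersol_S \<Omega> u1 u2 \<longleftrightarrow>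
     lsc_on \<Omega> u1 \<and> lsc_on \<Omega> u2 \<and>
     super_component \<Omega> u1 u2 \<and> super_component \<Omega> u2 u1"

end

theory Submission
  imports Defs
begin


lemma lsc_minus_cont:
  assumes "lsc_on U u" "continuous_on U \<phi>"
  shows "lsc_on U (\<lambda>x. u x - \<phi> x)"
  unfolding lsc_on_def
proof (intro ballI allI impI)
  fix x t assume x: "x \<in> U" and t: "t < u x - \<phi> x"
  define e where "e = u x - \<phi> x - t"
  have e: "e > 0" using t by (simp add: e_def)
  have 1: "eventually (\<lambda>y. u x - e/2 < u y) (at x within U)"
    using assms(1) x e unfolding lsc_on_def by auto
  have "(\<phi> \<longlongrightarrow> \<phi> x) (at x within U)"
    using assms(2) x by (simp add: continuous_on_def)
  then have 2: "eventually (\<lambda>y. \<phi> y < \<phi> x + e/2) (at x within U)" using e by (intro order_tendstoD(2)) auto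
  show "eventually (\<lambda>y. t < u y - \<phi> y) (at x within U)"
    using eventually_conj[OF 1 2] by eventually_elim (simp add: e_def field_simps)
qed

lemma lsc_attains_min:
  assumes lsc: "lsc_on U f" and K: "compact K" "K \<subseteq> U" "K \<noteq> {}"
  shows "\<exists>z\<in>K. \<forall>y\<in>K. f z \<le> f y"
proof (rule ccontr)
  assume "\<not> ?thesis"
  then have "\<forall>x\<in>K. \<exists>y\<in>K. f y < f x" by (auto simp: not_le)
  then obtain yy where yy: "\<And>x. x \<in> K \<Longrightarrow> yy x \<in> K \<and> f (yy x) < f x" by metis
  define t where "t x = (f (yy x) + f x) / 2" for x
  have "\<exists>Nb. open Nb \<and> x \<in> Nb \<and> (\<forall>z\<in>Nb. z \<in> U \<longrightarrow> t x < f z)" if x: "x \<in> K" for x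
  proof -
    have tx: "t x < f x" using yy[OF x] by (simp add: t_def)
    then have "eventually (\<lambda>y. t x < f y) (at x within U)"
      using lsc x K(2) unfolding lsc_on_def by auto
    then obtain S where S: "open S" "x \<in> S" "\<forall>z\<in>S. z \<noteq> x \<longrightarrow> z \<in> U \<longrightarrow> t x < f z"
      unfolding eventually_at_topological by blast
    then show ?thesis using tx by (intro exI[of _ S]) auto
  qed
  then obtain Nb where Nb: "\<And>x. x \<in> K \<Longrightarrow> open (Nb x) \<and> x \<in> Nb x \<and> (\<forall>z\<in>Nb x. z \<in> U \<longrightarrow> t x < f z)"
    by metis
  have "K \<subseteq> (\<Union>x\<in>K. Nb x)" using Nb by blast
  then obtain D where D: "D \<subseteq> K" "finite D" "K \<subseteq> (\<Union>x\<in>D. Nb x)"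
    using compactE_image[OF K(1), of K Nb] Nb by blast
  have "D \<noteq> {}" using D K(3) by blast
  have "Min (t ` D) \<in> t ` D" using D(2) \<open>D \<noteq> {}\<close> by (intro Min_in) auto
  then obtain x where x: "x \<in> D" "t x = Min (t ` D)" by auto
  have xK: "x \<in> K" using x D by blast
  then have "yy x \<in> K" using yy by blast
  then obtain x' where x': "x' \<in> D" "yy x \<in> Nb x'" using D(3) by blast
  have "t x' < f (yy x)" using Nb[of x'] x' D K(2) \<open>yy x \<in> K\<close> by blast
  moreover have "f (yy x) < t x" using yy[OF xK] by (simp add: t_def)
  moreover have "t x \<le> t x'" using x x' D(2) by simp
  ultimately show False by simp
qed

lemma outer_mv:
  fixes d h :: "real^'n"
  shows "(\<chi> i j. d$i * d$j) *v h = (d \<bullet> h) *\<^sub>R d"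
  by (simp add: vec_eq_iff matrix_vector_mult_def inner_vec_def sum_distrib_left sum_distrib_right mult_ac)



lemma Hmv:
  fixes d h :: "real^'n"
  shows "(\<chi> i j. c * ((if i = j then 1 else 0) - a * (d$i * d$j))) *v h = c *\<^sub>R (h - (a * (d \<bullet> h)) *\<^sub>R d)"
proof -
  have "(\<Sum>j\<in>UNIV. c * ((if i = j then 1 else 0) - a * (d$i * d$j)) * h$j)
      = (\<Sum>j\<in>UNIV. (if i = j then c * h$j else 0)) - (\<Sum>j\<in>UNIV. (c*a*d$i) * (d$j * h$j))" for i
    by (subst sum_subtractf[symmetric]) (rule sum.cong, auto simp: algebra_simps)
  also have "\<dots>i = c * h$i - (c*a*d$i) * (\<Sum>j\<in>UNIV. d$j * h$j)" for i
    by (simp add: sum_distrib_left)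
  finally show ?thesis
    by (simp add: vec_eq_iff matrix_vector_mult_def inner_vec_def algebra_simps)
qed

lemma phi_deriv:
  fixes xbar x :: "real^'n"
  shows "((\<lambda>x. m + \<delta> * (exp (- \<alpha> * ((x - xbar) \<bullet> (x - xbar))) - exp (- \<alpha> * R\<^sup>2))) has_derivative
     (\<lambda>h. ((- 2 * \<alpha> * \<delta> * exp (- \<alpha> * ((x - xbar) \<bullet> (x - xbar)))) *\<^sub>R (x - xbar)) \<bullet> h)) (at x)"
  by (auto intro!: derivative_eq_intros simp: algebra_simps inner_commute)

lemma g_deriv:
  fixes xbar x :: "real^'n"
  shows "((\<lambda>x. (- 2 * \<alpha> * \<delta> * exp (- \<alpha> * ((x - xbar) \<bullet> (x - xbar)))) *\<^sub>R (x - xbar)) has_derivative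
     (\<lambda>h. (\<chi> i j. (- 2 * \<alpha> * \<delta> * exp (- \<alpha> * ((x - xbar) \<bullet> (x - xbar)))) * ((if i = j then 1 else 0) - (2*\<alpha>) * ((x - xbar)$i * (x - xbar)$j))) *v h)) (at x)"
  unfolding Hmv
  by (auto intro!: derivative_eq_intros simp: algebra_simps inner_commute)

lemma H_cont:
  fixes xbar :: "real^'n"
  shows "continuous_on U (\<lambda>x. (\<chi> i j. (- 2 * \<alpha> * \<delta> * exp (- \<alpha> * ((x - xbar) \<bullet> (x - xbar)))) * ((if i = j then 1 else 0) - (2*\<alpha>) * ((x - xbar)$i * (x - xbar)$j)))::real^'n^'n)"
  by (intro continuous_intros)


theorem mainTheorem1:
  fixes U V :: "(real^'n) set" and u1 u2 :: "real^'n \<Rightarrow> real"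
    and x0 xbar :: "real^'n" and R :: real
  assumes "open U" and "connected U" and "bounded U"
    and "open V" and "closure V \<subseteq> U"
    and "visc_supersol_S U u1 u2"
    and "x0 \<in> frontier V"
    and "\<forall>x\<in>U. u1 x0 \<le> u1 x \<and> u1 x0 \<le> u2 x"
    and "\<forall>x\<in>V. u1 x0 < u1 x \<and> u1 x0 < u2 x"
    and "R > 0" and "ball xbar R \<subseteq> V" and "x0 \<in> frontier (ball xbar R)"
  shows "Liminf (at_right 0)
           (\<lambda>s::real. ereal ((u1 (x0 - s *\<^sub>R ((1 / norm (x0 - xbar)) *\<^sub>R (x0 - xbar))) - u1 x0) / s))
         > 0"
proof -
  note Rpos = \<open>R > 0\<close>
  define m where "m = u1 x0"
  have lsc1: "lsc_on U u1" and sup1: "super_component U u1 u2"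
    using assms(6) unfolding visc_supersol_S_def by auto
  have VU: "V \<subseteq> U" using assms(5) closure_subset by blast
  have ge: "\<And>x. x \<in> U \<Longrightarrow> m \<le> u1 x \<and> m \<le> u2 x" using assms(8) by (auto simp: m_def)
  have gt: "\<And>x. x \<in> V \<Longrightarrow> m < u1 x" using assms(9) by (auto simp: m_def)
  have nx0: "norm (x0 - xbar) = R"
    using assms(12) Rpos by (simp add: dist_norm norm_minus_commute)
  define S where "S = sphere xbar (R/2)"
  have SV: "S \<subseteq> V" using assms(11) Rpos by (auto simp: S_def)
  have "S \<noteq> {}" using Rpos by (simp add: S_def)
  moreover have "compact S" by (simp add: S_def)
  moreover have "S \<subseteq> U" using SV VU by blast
  ultimately obtain z1 where z1: "z1 \<in> S" "\<forall>y\<in>S. u1 z1 \<le> u1 y"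
    using lsc_attains_min[OF lsc1] by blast
  define \<delta> where "\<delta> = u1 z1 - m"
  have dpos: "\<delta> > 0" using gt[of z1] z1 SV by (auto simp: \<delta>_def)
  have onS: "\<And>y. y \<in> S \<Longrightarrow> m + \<delta> \<le> u1 y" using z1 by (auto simp: \<delta>_def)
  define \<alpha> where "\<alpha> = max 1 (4 / R\<^sup>2)"
  have a1: "\<alpha> \<ge> 1" and a2: "\<alpha> \<ge> 4 / R\<^sup>2" by (auto simp: \<alpha>_def)
  define E where "E x = exp (- \<alpha> * ((x - xbar) \<bullet> (x - xbar)))" for x
  define e0 where "e0 = exp (- \<alpha> * R\<^sup>2)"
  define \<phi> where "\<phi> x = m + \<delta> * (exp (- \<alpha> * ((x - xbar) \<bullet> (x - xbar))) - exp (- \<alpha> * R\<^sup>2))" for x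
  define g where "g x = (- 2 * \<alpha> * \<delta> * exp (- \<alpha> * ((x - xbar) \<bullet> (x - xbar)))) *\<^sub>R (x - xbar)" for x
  define H where "H x = ((\<chi> i j. (- 2 * \<alpha> * \<delta> * exp (- \<alpha> * ((x - xbar) \<bullet> (x - xbar)))) * ((if i = j then 1 else 0) - (2*\<alpha>) * ((x - xbar)$i * (x - xbar)$j))) :: real^'n^'n)" for x
  have C2: "C2_with U \<phi> g H"
    unfolding C2_with_def
  proof (intro conjI ballI)
    fix x show "(\<phi> has_derivative (\<lambda>h. g x \<bullet> h)) (at x)"
      unfolding \<phi>_def g_def by (rule phi_deriv)
  next
    fix x show "(g has_derivative (\<lambda>h. H x *v h)) (at x)"
      unfolding g_def H_def by (rule g_deriv)
  next
    show "continuous_on U H" unfolding H_def by (rule H_cont)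
  qed
  have phiE: "\<phi> x = m + \<delta> * (E x - e0)" for x by (simp add: \<phi>_def E_def e0_def)
  have Enorm: "E x = exp (- \<alpha> * (norm (x - xbar))\<^sup>2)" for x by (simp add: E_def power2_norm_eq_inner)
  have phicont: "continuous_on U \<phi>" unfolding \<phi>_def by (intro continuous_intros)
  define K where "K = cball xbar R - ball xbar (R/2)"
  have Kc: "compact K" unfolding K_def by (intro compact_diff) auto
  have KU: "K \<subseteq> U"
  proof -
    have "cball xbar R \<subseteq> closure V" using closure_mono[OF assms(11)] Rpos by simp
    then show ?thesis using assms(5) by (auto simp: K_def)
  qed
  have Kmem: "y \<in> K \<longleftrightarrow> R/2 \<le> norm (y - xbar) \<and> norm (y - xbar) \<le> R" for y
    by (auto simp: K_def dist_norm norm_minus_commute)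
  have comp: "\<forall>y\<in>K. \<phi> y \<le> u1 y"
  proof (rule ccontr)
    assume "\<not> ?thesis"
    then obtain y where y: "y \<in> K" "u1 y - \<phi> y < 0" by auto
    obtain z where z: "z \<in> K" "\<forall>y\<in>K. u1 z - \<phi> z \<le> u1 y - \<phi> y"
      using lsc_attains_min[OF lsc_minus_cont[OF lsc1 phicont] Kc KU] y by blast
    have fz: "u1 z - \<phi> z < 0" using z y by force
    define dz where "dz = norm (z - xbar)"
    have zU: "z \<in> U" using z KU by blast
    have Ez1: "E z \<le> 1" unfolding Enorm using a1 by simp
    have e0pos: "e0 > 0" by (simp add: e0_def)
    have dz1: "dz \<noteq> R"
    proof
      assume "dz = R"
      then have "E z = e0" by (simp add: Enorm e0_def dz_def)
      then show False using fz ge[OF zU] by (simp add: phiE)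
    qed
    have dz2: "dz \<noteq> R/2"
    proof
      assume "dz = R/2"
      then have "z \<in> S" by (simp add: S_def dz_def dist_norm norm_minus_commute)
      then have "m + \<delta> \<le> u1 z" by (rule onS)
      moreover have "\<phi> z \<le> m + \<delta>" using Ez1 e0pos dpos by (simp add: phiE mult_left_le)
      ultimately show False using fz by simp
    qed
    have dzr: "R/2 < dz" "dz < R" using z(1) dz1 dz2 by (auto simp: Kmem dz_def)
    define e where "e = min (dz - R/2) (R - dz)"
    have epos: "e > 0" using dzr by (simp add: e_def)
    have ballK: "ball z e \<subseteq> K"
    proof
      fix y assume "y \<in> ball z e"
      then have "norm (y - z) < e" by (simp add: dist_norm norm_minus_commute)
      moreover have "norm (y - xbar) \<le> norm (y - z) + dz" "dz \<le> norm (y - z) + norm (y - xbar)"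
        using norm_triangle_ineq[of "y - z" "z - xbar"] norm_triangle_ineq[of "z - y" "y - xbar"]
        by (auto simp: dz_def norm_minus_commute)
      ultimately show "y \<in> K" unfolding Kmem e_def by auto
    qed
    have locmin: "\<exists>e>0. \<forall>y\<in>U \<inter> ball z e. u1 y - \<phi> y \<ge> u1 z - \<phi> z"
      using epos ballK z(2) by blast
    have visc: "- inf_lap_minus (g z) (H z) + u1 z - u2 z \<ge> 0"
      using sup1 C2 zU locmin unfolding super_component_def by blast
    define d where "d = z - xbar"
    define q where "q = d \<bullet> d"
    define c where "c = - 2 * \<alpha> * \<delta> * E z"
    have qdz: "q = dz\<^sup>2" by (simp add: q_def d_def dz_def power2_norm_eq_inner)
    have qge: "q \<ge> R\<^sup>2 / 4"
    proof -
      have "(R/2)\<^sup>2 \<le> dz\<^sup>2" using dzr Rpos by (intro power_mono) auto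
      then show ?thesis by (simp add: qdz power_divide)
    qed
    have qpos: "q > 0" using qge Rpos by (smt (verit) divide_pos_pos zero_less_power)
    have Epos: "E z > 0" by (simp add: E_def)
    have cneg: "c < 0" using a1 dpos Epos by (simp add: c_def mult_pos_pos)
    have gz: "g z = c *\<^sub>R d" by (simp add: g_def c_def d_def E_def)
    have Hz: "H z *v h = c *\<^sub>R (h - (2*\<alpha> * (d \<bullet> h)) *\<^sub>R d)" for h
      unfolding H_def Hmv by (simp add: c_def d_def E_def)
    have dne: "d \<noteq> 0" using qpos by (auto simp: q_def)
    have gne: "g z \<noteq> 0" using gz cneg dne by simp
    have Hg: "H z *v g z = (c * c * (1 - 2 * \<alpha> * q)) *\<^sub>R d"
      by (simp add: Hz gz q_def algebra_simps)
    have num: "g z \<bullet> (H z *v g z) = c * c * c * (1 - 2 * \<alpha> * q) * q"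
      unfolding Hg by (simp add: gz q_def algebra_simps)
    have den: "(norm (g z))\<^sup>2 = c * c * q"
      unfolding power2_norm_eq_inner by (simp add: gz q_def algebra_simps)
    have lap: "inf_lap_minus (g z) (H z) = c * (1 - 2 * \<alpha> * q)"
      using gne cneg qpos unfolding inf_lap_minus_def num den by (simp add: field_simps)
    have "u1 z - u2 z < \<delta> * E z"
    proof -
      have "u1 z < \<phi> z" using fz by simp
      also have "\<phi> z \<le> m + \<delta> * E z" using e0pos dpos by (simp add: phiE)
      finally show ?thesis using ge[OF zU] by simp
    qed
    moreover have "\<alpha> * q \<ge> 1"
    proof -
      have "\<alpha> * q \<ge> (4 / R\<^sup>2) * (R\<^sup>2 / 4)" using a1 a2 qge Rpos by (intro mult_mono) auto
      then show ?thesis using Rpos by simp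
    qed
    then have "2 * 1 \<le> (2 * \<alpha>) * (2 * \<alpha> * q - 1)" using a1
      by (intro mult_mono) auto
    then have "2 * \<alpha> * (2 * \<alpha> * q - 1) \<ge> 2" by simp
    then have "c * (1 - 2 * \<alpha> * q) \<ge> 2 * \<delta> * E z"
    proof -
      assume h: "2 * \<alpha> * (2 * \<alpha> * q - 1) \<ge> 2"
      have "c * (1 - 2 * \<alpha> * q) = (\<delta> * E z) * (2 * \<alpha> * (2 * \<alpha> * q - 1))"
        by (simp add: c_def algebra_simps)
      also have "\<dots> \<ge> (\<delta> * E z) * 2" using h dpos Epos by (intro mult_left_mono) auto
      finally show ?thesis by simp
    qed
    moreover have "\<delta> * E z > 0" using dpos Epos by simp
    ultimately show False using visc lap by linarith
  qed
  define c0 where "c0 = \<delta> * e0 * \<alpha> * R"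
  have c0pos: "c0 > 0" using dpos a1 Rpos by (simp add: c0_def e0_def)
  have bound: "c0 \<le> (u1 (x0 - s *\<^sub>R ((1 / norm (x0 - xbar)) *\<^sub>R (x0 - xbar))) - u1 x0) / s"
    if s: "0 < s" "s < R/2" for s
  proof -
    define y where "y = x0 - s *\<^sub>R ((1 / norm (x0 - xbar)) *\<^sub>R (x0 - xbar))"
    have "y - xbar = (1 - s / R) *\<^sub>R (x0 - xbar)"
      using Rpos by (simp add: y_def nx0 algebra_simps)
    then have "norm (y - xbar) = \<bar>1 - s / R\<bar> * R" by (simp add: nx0)
    moreover have "\<bar>1 - s / R\<bar> * R = R - s" using s Rpos by (simp add: field_simps)
    ultimately have ny: "norm (y - xbar) = R - s" by simp
    have yK: "y \<in> K" using ny s by (simp add: Kmem)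
    have "\<phi> y \<le> u1 y" using comp yK by blast
    moreover have "E y = e0 * exp (\<alpha> * (2 * R * s - s\<^sup>2))"
      unfolding Enorm ny e0_def mult_exp_exp by (simp add: power2_eq_square algebra_simps)
    moreover have "exp (\<alpha> * (2 * R * s - s\<^sup>2)) \<ge> 1 + \<alpha> * R * s"
    proof -
      have "\<alpha> * (2 * R * s - s\<^sup>2) \<ge> \<alpha> * (R * s)"
        using s a1 by (intro mult_left_mono) (auto simp: power2_eq_square algebra_simps mult_right_mono)
      then show ?thesis using exp_ge_add_one_self[of "\<alpha> * (2 * R * s - s\<^sup>2)"] by (simp add: algebra_simps)
    qed
    ultimately have "e0 * (\<alpha> * R * s) \<le> E y - e0"
      using mult_left_mono[of "1 + \<alpha> * R * s" "exp (\<alpha> * (2 * R * s - s\<^sup>2))" e0]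
      by (simp add: e0_def algebra_simps)
    then have "\<delta> * (e0 * (\<alpha> * R * s)) \<le> \<delta> * (E y - e0)"
      using dpos by (intro mult_left_mono) auto
    then have "m + \<delta> * e0 * (\<alpha> * R * s) \<le> u1 y"
      using \<open>\<phi> y \<le> u1 y\<close> phiE[of y] by (simp add: mult.assoc)
    then have "c0 * s \<le> u1 y - m" by (simp add: c0_def algebra_simps)
    then show ?thesis using s by (simp add: y_def m_def pos_le_divide_eq)
  qed
  have "eventually (\<lambda>s. ereal c0 \<le> ereal ((u1 (x0 - s *\<^sub>R ((1 / norm (x0 - xbar)) *\<^sub>R (x0 - xbar))) - u1 x0) / s)) (at_right (0::real))"
    using Rpos bound by (intro eventually_at_rightI[of 0 "R/2"]) auto
  then have "ereal c0 \<le> Liminf (at_right 0)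
           (\<lambda>s::real. ereal ((u1 (x0 - s *\<^sub>R ((1 / norm (x0 - xbar)) *\<^sub>R (x0 - xbar))) - u1 x0) / s))"
    by (rule Liminf_bounded)
  then show ?thesis using c0pos by (meson ereal_less(2) less_le_trans)
qed

end
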